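(* For a positive integer $d$, let $s(d)$ be the number of positive integers $e<d$ such that $e\mid d$ and $(e+1)\mid(d+1)$. Let $S(N)=\sum_{d=1}^N s(d)$. Then $$S(N) = N + O(N^{1/2}) \quad\text{as } N\to\infty,$$ and $\sup_{d\ge1} s(d) = \infty$.
   Context: Here $s(d)$ is the number of "neat Sylvester-type" canonical forms of degree $d$. These are representations of a general binary $d$-ic as a sum of $r$ forms of degree $e$ raised to the power $d/e$, where $r(e+1)=d+1$ and $e<d$. *)

theory Defs
  imports "HOL-Library.Landau_Symbols" Complex_Main
begin

definition s :: "nat \<Rightarrow> nat" where
  "s d = card {e :: nat. 0 < e \<and> e < d \<and> e dvd d \<and> (e + 1) dvd (d + 1)}"

definition S :: "nat \<Rightarrow> nat" where
  "S N = (\<Sum>d = 1..N. s d)"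

end

theory Submission
  imports Defs
begin


lemma pow_dvd_lemma: "(2::nat)^j - 1 dvd 2^(j*q) - 1"
proof -
  have "(2::int)^j - 1 dvd (2^j)^q - 1"
    using power_diff_1_eq[of "(2::int)^j" q] by simp
  hence "int (2^j - 1) dvd int (2^(j*q) - 1)"
    by (simp add: of_nat_diff power_mult)
  thus ?thesis by (simp only: int_dvd_int_iff)
qed

lemma s_big: "s (2^(2^n) - 1) \<ge> n"
proof -
  let ?d = "(2::nat)^(2^n) - 1"
  let ?f = "\<lambda>i::nat. (2::nat)^(2^i) - 1"
  have sub: "?f ` {..<n} \<subseteq> {e. 0 < e \<and> e < ?d \<and> e dvd ?d \<and> (e + 1) dvd (?d + 1)}"
  proof
    fix x assume "x \<in> ?f ` {..<n}"
    then obtain i where i: "i < n" "x = ?f i" by auto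
    have p1: "(1::nat) < 2^(2^i)" using one_less_power[of "2::nat" "2^i"] by simp
    have "(2::nat)^i < 2^n" using i by simp
    hence p2: "(2::nat)^(2^i) < 2^(2^n)" by simp
    have "2^i dvd (2::nat)^n" using i by (simp add: le_imp_power_dvd)
    then obtain q where q: "(2::nat)^n = 2^i * q" by auto
    have dv: "x dvd ?d" using i pow_dvd_lemma[of "2^i" q] q by simp
    have h3: "(2::nat)^(2^i) dvd 2^(2^n)" using p2 by (simp add: le_imp_power_dvd)
    have h0: "0 < x" using i(2) p1 by simp
    have hlt: "x < ?d" using i(2) p1 p2 diff_less_mono[of "(2::nat)^(2^i)" "2^(2^n)" 1] by simp
    have h4: "x + 1 dvd ?d + 1" using i(2) p1 h3 by simp
    show "x \<in> {e. 0 < e \<and> e < ?d \<and> e dvd ?d \<and> (e + 1) dvd (?d + 1)}"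
      using h0 hlt dv h4 by blast
  qed
  have fin: "finite {e. 0 < e \<and> e < ?d \<and> e dvd ?d \<and> (e + 1) dvd (?d + 1)}" by auto
  have inj: "inj_on ?f {..<n}"
  proof (rule inj_onI)
    fix a b assume "a \<in> {..<n}" "b \<in> {..<n}" "?f a = ?f b"
    moreover have "(1::nat) \<le> 2^(2^a)" "(1::nat) \<le> 2^(2^b)" by simp_all
    ultimately have "(2::nat)^(2^a) = 2^(2^b)" by linarith
    thus "a = b" by (simp add: power_inject_exp)
  qed
  have "n = card (?f ` {..<n})" using card_image[OF inj] by simp
  also have "\<dots> \<le> s ?d" unfolding s_def using card_mono[OF fin sub] .
  finally show ?thesis .
qed

lemma unbdd: "\<not> bdd_above (s ` {1..})"
proof
  assume "bdd_above (s ` {1..})"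
  then obtain B where B: "\<And>d. d \<ge> 1 \<Longrightarrow> s d \<le> B" by (auto simp: bdd_above_def)
  have "(1::nat) < 2^(2^(B+1))" using one_less_power[of "2::nat" "2^(B+1)"] by simp
  hence "s (2^(2^(B+1)) - 1) \<le> B" using B by simp
  with s_big[of "B+1"] show False by simp
qed


definition P :: "nat \<Rightarrow> nat \<Rightarrow> bool" where
  "P e d \<longleftrightarrow> e < d \<and> e dvd d \<and> (e + 1) dvd (d + 1)"

lemma count_e:
  assumes e: "e \<ge> 1"
  shows "card {d \<in> {1..N}. P e d} = (N - e) div (e * (e + 1))"
proof -
  define M where "M = e * (e + 1)"
  define q where "q = (N - e) div M"
  have M: "M \<ge> 1" using e by (simp add: M_def)
  have eq: "{d \<in> {1..N}. P e d} = (\<lambda>m. e + m * M) ` {1..q}"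
  proof
    show "{d \<in> {1..N}. P e d} \<subseteq> (\<lambda>m. e + m * M) ` {1..q}"
    proof
      fix d assume "d \<in> {d \<in> {1..N}. P e d}"
      hence d: "d \<le> N" "e < d" "e dvd d" "(e+1) dvd (d+1)" by (auto simp: P_def)
      have "e dvd d - e" using d by (simp add: dvd_diff_nat)
      moreover have "(e+1) dvd (d + 1) - (e + 1)" using d(4) dvd_diff_nat dvd_refl by blast
      moreover have "(d + 1) - (e + 1) = d - e" by simp
      ultimately have "M dvd d - e" unfolding M_def
        by (intro divides_mult) auto
      then obtain m where m: "d - e = M * m" by auto
      have "m \<ge> 1" using m d(2) by (cases m) auto
      moreover have "m \<le> q" unfolding q_def
      proof -
        have "M * m \<le> N - e" using m d by simp
        hence "M * m div M \<le> (N - e) div M" by (rule div_le_mono)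
        thus "m \<le> (N - e) div M" using M by simp
      qed
      moreover have "d = e + m * M" using m d(2) by (simp add: mult.commute)
      ultimately show "d \<in> (\<lambda>m. e + m * M) ` {1..q}" by auto
    qed
  next
    show "(\<lambda>m. e + m * M) ` {1..q} \<subseteq> {d \<in> {1..N}. P e d}"
    proof
      fix d assume "d \<in> (\<lambda>m. e + m * M) ` {1..q}"
      then obtain m where m: "1 \<le> m" "m \<le> q" "d = e + m * M" by auto
      have "m * M \<le> q * M" using m by simp
      also have "\<dots> \<le> N - e" unfolding q_def by (rule div_times_less_eq_dividend)
      finally have le: "m * M \<le> N - e" .
      have "M \<le> m * M" using m by simp
      hence lt: "e < d" using m M by simp
      have "d \<le> N" using le m(3) lt by linarith
      moreover have "e dvd d" using m(3) by (simp add: M_def)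
      moreover have "d + 1 = (e + 1) * (1 + m * e)" using m(3) by (simp add: M_def algebra_simps)
      hence "(e+1) dvd (d+1)" by (metis dvd_triv_left)
      ultimately show "d \<in> {d \<in> {1..N}. P e d}" using lt by (auto simp: P_def)
    qed
  qed
  have inj: "inj_on (\<lambda>m. e + m * M) {1..q}"
    by (rule inj_onI) (use M in simp)
  show ?thesis unfolding eq card_image[OF inj] by (simp add: q_def M_def)
qed

lemma S_eq: "S N = (\<Sum>e=1..N. (N - e) div (e * (e + 1)))"
proof -
  have "S N = (\<Sum>d=1..N. card {e \<in> {1..N}. P e d})"
    unfolding S_def s_def
  proof (rule sum.cong[OF refl])
    fix d assume "d \<in> {1..N}"
    hence "{e. 0 < e \<and> e < d \<and> e dvd d \<and> (e + 1) dvd (d + 1)} = {e \<in> {1..N}. P e d}"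
      by (auto simp: P_def)
    thus "card {e. 0 < e \<and> e < d \<and> e dvd d \<and> (e + 1) dvd (d + 1)} = card {e \<in> {1..N}. P e d}" by simp
  qed
  also have "\<dots> = (\<Sum>d=1..N. \<Sum>e=1..N. if P e d then 1 else 0)"
    by (simp add: sum.inter_filter[symmetric])
  also have "\<dots> = (\<Sum>e=1..N. \<Sum>d=1..N. if P e d then 1 else 0)"
    by (rule sum.swap)
  also have "\<dots> = (\<Sum>e=1..N. card {d \<in> {1..N}. P e d})"
    by (simp add: sum.inter_filter[symmetric])
  also have "\<dots> = (\<Sum>e=1..N. (N - e) div (e * (e + 1)))"
    by (rule sum.cong[OF refl]) (rule count_e, simp)
  finally show ?thesis .
qed


lemma tele: "(\<Sum>e=1..n. 1/(real e*(real e+1))) = 1 - 1/(real n+1)"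
proof (induction n)
  case 0 then show ?case by simp
next
  case (Suc n)
  have "(\<Sum>e=1..Suc n. 1/(real e*(real e+1))) = (1 - 1/(real n+1)) + 1/((real n + 1)*(real n+2))"
    using Suc by (simp add: add.commute)
  also have "\<dots> = 1 - 1/(real (Suc n)+1)"
  proof -
    have h: "real n + 1 > 0" "real n + 2 > 0" by simp_all
    show ?thesis using h by (simp add: field_simps) (smt (verit) of_nat_0_le_iff mult_nonneg_nonneg)
  qed
  finally show ?case .
qed

lemma term_upper:
  assumes "e \<ge> 1"
  shows "real ((N - e) div (e * (e + 1))) \<le> real N * (1/(real e*(real e+1)))"
proof -
  have "(N - e) div (e * (e + 1)) * (e * (e + 1)) \<le> N"
    using div_times_less_eq_dividend[of "N - e" "e*(e+1)"] by linarith
  hence "real ((N - e) div (e * (e + 1))) * (real e*(real e+1)) \<le> real N"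
    by (metis of_nat_le_iff of_nat_mult of_nat_add of_nat_1)
  moreover have D: "real e*(real e+1) > 0" using assms by simp
  ultimately have "real ((N - e) div (e * (e + 1))) \<le> real N / (real e*(real e+1))"
    by (simp add: pos_le_divide_eq del: of_nat_add of_nat_mult)
  thus ?thesis by simp
qed

lemma term_lower:
  assumes "e \<ge> 1" "e \<le> N"
  shows "real N * (1/(real e*(real e+1))) - 2 \<le> real ((N - e) div (e * (e + 1)))"
proof -
  define M where "M = e * (e + 1)"
  define q where "q = (N - e) div M"
  have Mp: "M > 0" using assms by (simp add: M_def)
  have "N - e = q * M + (N - e) mod M" by (simp add: q_def)
  moreover have "(N - e) mod M < M" using Mp by simp
  ultimately have "N - e < (q + 1) * M" by simp
  hence "real N - real e < (real q + 1) * (real e * (real e + 1))"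
    using assms unfolding M_def
    by (metis of_nat_less_iff of_nat_mult of_nat_add of_nat_1 of_nat_diff)
  moreover have D: "real e*(real e+1) > 0" using assms by simp
  ultimately have "(real N - real e) / (real e * (real e + 1)) < real q + 1"
    by (simp add: pos_divide_less_eq del: of_nat_add of_nat_mult)
  hence "real N / (real e * (real e + 1)) - real e / (real e * (real e + 1)) < real q + 1"
    by (simp add: diff_divide_distrib)
  moreover have "real e \<le> real e * (real e + 1)" using assms by simp
  hence "real e / (real e * (real e + 1)) \<le> 1" using D by (simp add: divide_le_eq)
  ultimately show ?thesis by (simp add: q_def M_def)
qed

lemma S_upper: "real (S N) \<le> real N"
proof -
  have "real (S N) = (\<Sum>e=1..N. real ((N - e) div (e * (e + 1))))" by (simp add: S_eq)
  also have "\<dots> \<le> (\<Sum>e=1..N. real N * (1/(real e*(real e+1))))"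
    by (rule sum_mono) (rule term_upper, simp)
  also have "\<dots> = real N * (\<Sum>e=1..N. 1/(real e*(real e+1)))" by (rule sum_distrib_left[symmetric])
  also have "\<dots> = real N * (1 - 1/(real N+1))" by (simp only: tele)
  also have "\<dots> \<le> real N" by (simp add: field_simps)
  finally show ?thesis .
qed

lemma S_lower: "real N - 3 * sqrt (real N) \<le> real (S N)"
proof -
  define E where "E = nat \<lfloor>sqrt (real N)\<rfloor>"
  have E1: "real E \<le> sqrt (real N)" unfolding E_def by simp
  have E2: "sqrt (real N) < real E + 1" unfolding E_def by linarith
  have "real E * real E \<le> sqrt (real N) * sqrt (real N)" using E1 by (intro mult_mono) auto
  hence "real (E * E) \<le> real N" by simp
  hence "E * E \<le> N" by (simp only: of_nat_le_iff)
  moreover have "E \<le> E * E" by (cases E) auto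
  ultimately have EN: "E \<le> N" by linarith
  have "(\<Sum>e=1..E. real N * (1/(real e*(real e+1))) - 2) = (\<Sum>e=1..E. real N * (1/(real e*(real e+1)))) - (\<Sum>e=1..E. 2)"
    by (rule sum_subtractf)
  also have "\<dots> = real N * (\<Sum>e=1..E. 1/(real e*(real e+1))) - 2 * real E"
    by (subst sum_distrib_left) simp
  finally have "real N * (1 - 1/(real E+1)) - 2 * real E = (\<Sum>e=1..E. real N * (1/(real e*(real e+1))) - 2)"
    by (simp only: tele)
  also have "\<dots> \<le> (\<Sum>e=1..E. real ((N - e) div (e * (e + 1))))"
    by (rule sum_mono) (rule term_lower, use EN in auto)
  also have "\<dots> \<le> (\<Sum>e=1..N. real ((N - e) div (e * (e + 1))))"
    by (rule sum_mono2) (use EN in auto)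
  also have "\<dots> = real (S N)" by (simp add: S_eq)
  finally have A: "real N - real N / (real E + 1) - 2 * real E \<le> real (S N)" by (simp add: field_simps)
  have "real N = sqrt (real N) * sqrt (real N)" by simp
  also have "\<dots> \<le> sqrt (real N) * (real E + 1)" using E2 by (intro mult_left_mono) auto
  finally have "real N / (real E + 1) \<le> sqrt (real N)" by (simp add: field_simps)
  thus ?thesis using A E1 by linarith
qed

theorem theorem4p5:
  shows "(\<lambda>N. real (S N) - real N) \<in> O[at_top](\<lambda>N. sqrt (real N))
         \<and> \<not> bdd_above (s ` {1..})"
proof
  show "(\<lambda>N. real (S N) - real N) \<in> O[at_top](\<lambda>N. sqrt (real N))"
  proof (rule bigoI[where c = 3])
    show "\<forall>\<^sub>F N in at_top. norm (real (S N) - real N) \<le> 3 * norm (sqrt (real N))"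
    proof (rule always_eventually, rule allI)
      fix N
      show "norm (real (S N) - real N) \<le> 3 * norm (sqrt (real N))"
        using S_upper[of N] S_lower[of N] by simp
    qed
  qed
  show "\<not> bdd_above (s ` {1..})" by (rule unbdd)
qed
end
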